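(* Let $p$ be a prime and $S$ a finite $p$-group. If $L$ is a subgroup of $S$ with $\mathfrak{X}(S)\leq L\leq S$, then $\mathfrak{X}(S)\leq \mathfrak{X}(L)$.
   Context: For a finite $p$-group $G$ and subgroups $A,B$, write $[A,B;1]=[A,B]$ and $[A,B;k]=[[A,B;k-1],B]$. $\Omega_1(G)$ denotes the subgroup generated by the elements of order $p$ in $G$. The Oliver subgroup $\mathfrak{X}(G)$ of a finite $p$-group $G$ is the unique largest normal subgroup $K$ of $G$ admitting a chain $1=Q_0\leq Q_1\leq\cdots\leq Q_n=K$ of normal subgroups $Q_i\unlhd G$ such that $[\Omega_1(C_G(Q_{i-1})),Q_i;p-1]=1$ for each $1\leq i\leq n$. For a subgroup $L\leq S$, $\mathfrak{X}(L)$ is the Oliver subgroup of $L$ regarded as a $p$-group in its own right (normality and centralizers taken in $L$). *)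

theory Defs
  imports "HOL-Algebra.Algebra" "HOL-Algebra.Multiplicative_Group"
begin

definition p_group :: "('a, 'b) monoid_scheme \<Rightarrow> nat \<Rightarrow> bool" where
  "p_group G p \<longleftrightarrow> group G \<and> Factorial_Ring.prime p \<and> finite (carrier G) \<and> (\<exists>n. order G = p ^ n)"

definition comm_elem :: "('a, 'b) monoid_scheme \<Rightarrow> 'a \<Rightarrow> 'a \<Rightarrow> 'a" where
  "comm_elem G x y = inv\<^bsub>G\<^esub> x \<otimes>\<^bsub>G\<^esub> inv\<^bsub>G\<^esub> y \<otimes>\<^bsub>G\<^esub> x \<otimes>\<^bsub>G\<^esub> y"

definition comm_subgroup :: "('a, 'b) monoid_scheme \<Rightarrow> 'a set \<Rightarrow> 'a set \<Rightarrow> 'a set" where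
  "comm_subgroup G A B = generate G {comm_elem G a b | a b. a \<in> A \<and> b \<in> B}"

text \<open>Iterated commutator: comm_iter G A B k = [A,B;k], with [A,B;0] = A,
  so [A,B;1] = [A,B] and [A,B;k] = [[A,B;k-1],B].\<close>
fun comm_iter :: "('a, 'b) monoid_scheme \<Rightarrow> 'a set \<Rightarrow> 'a set \<Rightarrow> nat \<Rightarrow> 'a set" where
  "comm_iter G A B 0 = A"
| "comm_iter G A B (Suc k) = comm_subgroup G (comm_iter G A B k) B"

definition centralizer :: "('a, 'b) monoid_scheme \<Rightarrow> 'a set \<Rightarrow> 'a set" where
  "centralizer G Q = {g \<in> carrier G. \<forall>q\<in>Q. g \<otimes>\<^bsub>G\<^esub> q = q \<otimes>\<^bsub>G\<^esub> g}"

definition Omega1 :: "('a, 'b) monoid_scheme \<Rightarrow> nat \<Rightarrow> 'a set \<Rightarrow> 'a set" where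
  "Omega1 G p H = generate G {x \<in> H. group.ord G x = p}"

definition oliver_chain :: "('a, 'b) monoid_scheme \<Rightarrow> nat \<Rightarrow> 'a set \<Rightarrow> bool" where
  "oliver_chain G p K \<longleftrightarrow>
     (\<exists>(n::nat) (Q :: nat \<Rightarrow> 'a set).
        Q 0 = {\<one>\<^bsub>G\<^esub>} \<and> Q n = K \<and>
        (\<forall>i\<le>n. Q i \<lhd> G) \<and>
        (\<forall>i<n. Q i \<subseteq> Q (Suc i)) \<and>
        (\<forall>i. 1 \<le> i \<and> i \<le> n \<longrightarrow>
              comm_iter G (Omega1 G p (centralizer G (Q (i - 1)))) (Q i) (p - 1) = {\<one>\<^bsub>G\<^esub>}))"

definition oliver :: "('a, 'b) monoid_scheme \<Rightarrow> nat \<Rightarrow> 'a set" where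
  "oliver G p = (THE K. K \<lhd> G \<and> oliver_chain G p K \<and>
                       (\<forall>K'. K' \<lhd> G \<and> oliver_chain G p K' \<longrightarrow> K' \<subseteq> K))"

end

theory Submission
  imports Defs
begin


context group begin

lemma centralizer_sub: "centralizer G Q \<subseteq> carrier G"
  unfolding centralizer_def by auto

lemma centralizer_subgroup:
  assumes "Q \<subseteq> carrier G" shows "subgroup (centralizer G Q) G"
proof (rule subgroupI)
  show "centralizer G Q \<subseteq> carrier G" by (rule centralizer_sub)
  show "centralizer G Q \<noteq> {}" using assms unfolding centralizer_def by (auto intro!: exI[of _ "\<one>"])
next
  fix a assume a: "a \<in> centralizer G Q"
  show "inv a \<in> centralizer G Q"
    unfolding centralizer_def
  proof (intro CollectI conjI ballI)
    show ac: "inv a \<in> carrier G" using a centralizer_sub by auto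
    fix q assume q: "q \<in> Q"
    have qc: "q \<in> carrier G" using q assms by auto
    have ac2: "a \<in> carrier G" using a centralizer_sub by auto
    have e: "a \<otimes> q = q \<otimes> a" using a q unfolding centralizer_def by auto
    have "inv a \<otimes> q = inv a \<otimes> q \<otimes> (a \<otimes> inv a)" using ac ac2 qc by simp
    also have "\<dots> = inv a \<otimes> (q \<otimes> a) \<otimes> inv a" using ac ac2 qc by (simp add: m_assoc)
    also have "\<dots> = inv a \<otimes> (a \<otimes> q) \<otimes> inv a" using e by simp
    also have "\<dots> = q \<otimes> inv a" using ac ac2 qc by (simp add: m_assoc[symmetric])
    finally show "inv a \<otimes> q = q \<otimes> inv a" .
  qed
next
  fix a b assume a: "a \<in> centralizer G Q" and b: "b \<in> centralizer G Q"
  show "a \<otimes> b \<in> centralizer G Q"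
    unfolding centralizer_def
  proof (intro CollectI conjI ballI)
    have ac: "a \<in> carrier G" "b \<in> carrier G" using a b centralizer_sub by auto
    thus "a \<otimes> b \<in> carrier G" by simp
    fix q assume q: "q \<in> Q"
    have qc: "q \<in> carrier G" using q assms by auto
    have e: "a \<otimes> q = q \<otimes> a" "b \<otimes> q = q \<otimes> b" using a b q unfolding centralizer_def by auto
    have "a \<otimes> b \<otimes> q = a \<otimes> (b \<otimes> q)" using ac qc by (simp add: m_assoc)
    also have "\<dots> = a \<otimes> q \<otimes> b" using e ac qc by (metis m_assoc)
    also have "\<dots> = q \<otimes> a \<otimes> b" using e by simp
    also have "\<dots> = q \<otimes> (a \<otimes> b)" using ac qc by (simp add: m_assoc)
    finally show "a \<otimes> b \<otimes> q = q \<otimes> (a \<otimes> b)" .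
  qed
qed

lemma centralizer_anti: "A \<subseteq> B \<Longrightarrow> centralizer G B \<subseteq> centralizer G A"
  unfolding centralizer_def by auto

lemma centralizer_conj:
  assumes N: "N \<lhd> G" and c: "c \<in> centralizer G N" and g: "g \<in> carrier G"
  shows "inv g \<otimes> c \<otimes> g \<in> centralizer G N"
  unfolding centralizer_def
proof (intro CollectI conjI ballI)
  have cc: "c \<in> carrier G" using c centralizer_sub by auto
  thus "inv g \<otimes> c \<otimes> g \<in> carrier G" using g by simp
  fix n assume n: "n \<in> N"
  have nc: "n \<in> carrier G" using subgroup.subset[OF normal_imp_subgroup[OF N]] n by blast
  have m: "g \<otimes> n \<otimes> inv g \<in> N" by (rule normal.inv_op_closed2[OF N g n])
  hence e: "c \<otimes> (g \<otimes> n \<otimes> inv g) = (g \<otimes> n \<otimes> inv g) \<otimes> c" using c unfolding centralizer_def by auto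
  have "inv g \<otimes> c \<otimes> g \<otimes> n = inv g \<otimes> (c \<otimes> (g \<otimes> n \<otimes> inv g)) \<otimes> g"
    using g cc nc by (simp add: m_assoc)
  also have "\<dots> = inv g \<otimes> ((g \<otimes> n \<otimes> inv g) \<otimes> c) \<otimes> g" using e by simp
  also have "\<dots> = n \<otimes> (inv g \<otimes> c \<otimes> g)"
    using g cc nc by (simp add: m_assoc[symmetric])
  finally show "inv g \<otimes> c \<otimes> g \<otimes> n = n \<otimes> (inv g \<otimes> c \<otimes> g)" .
qed

lemma comm_iter_mono1: "A \<subseteq> A' \<Longrightarrow> comm_iter G A B k \<subseteq> comm_iter G A' B k"
proof (induction k)
  case 0 thus ?case by simp
next
  case (Suc k)
  have "{comm_elem G a b | a b. a \<in> comm_iter G A B k \<and> b \<in> B}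
        \<subseteq> {comm_elem G a b | a b. a \<in> comm_iter G A' B k \<and> b \<in> B}"
    using Suc by blast
  thus ?case unfolding comm_iter.simps comm_subgroup_def by (rule mono_generate)
qed

lemma Omega1_mono: "A \<subseteq> A' \<Longrightarrow> Omega1 G p A \<subseteq> Omega1 G p A'"
  unfolding Omega1_def by (rule mono_generate) auto

lemma comm_elem_closed: "a \<in> carrier G \<Longrightarrow> b \<in> carrier G \<Longrightarrow> comm_elem G a b \<in> carrier G"
  unfolding comm_elem_def by simp

lemma comm_iter_carrier:
  assumes "A \<subseteq> carrier G" "B \<subseteq> carrier G" shows "comm_iter G A B k \<subseteq> carrier G"
proof (induction k)
  case 0 thus ?case using assms by simp
next
  case (Suc k)
  have "{comm_elem G a b | a b. a \<in> comm_iter G A B k \<and> b \<in> B} \<subseteq> carrier G"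
    using Suc assms comm_elem_closed by blast
  thus ?case unfolding comm_iter.simps comm_subgroup_def by (rule generate_incl)
qed

lemma comm_iter_one: "0 < k \<Longrightarrow> \<one> \<in> comm_iter G A B k"
  by (cases k) (auto simp: comm_subgroup_def intro: generate.one)

lemma comm_iter_in_C:
  assumes K: "K \<lhd> G" and R: "R \<subseteq> carrier G" and Xs: "Xs \<subseteq> centralizer G K"
  shows "comm_iter G Xs R k \<subseteq> centralizer G K"
proof (induction k)
  case 0 thus ?case using Xs by simp
next
  case (Suc k)
  have Kc: "K \<subseteq> carrier G" using subgroup.subset[OF normal_imp_subgroup[OF K]] .
  have sg: "subgroup (centralizer G K) G" using centralizer_subgroup[OF Kc] .
  have "{comm_elem G a b | a b. a \<in> comm_iter G Xs R k \<and> b \<in> R} \<subseteq> centralizer G K"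
  proof clarify
    fix a b assume a: "a \<in> comm_iter G Xs R k" and b: "b \<in> R"
    have aC: "a \<in> centralizer G K" using a Suc by auto
    have ac: "a \<in> carrier G" using aC centralizer_sub by auto
    have bc: "b \<in> carrier G" using b R by auto
    have "inv a \<in> centralizer G K" by (rule subgroup.m_inv_closed[OF sg aC])
    moreover have "inv b \<otimes> a \<otimes> b \<in> centralizer G K" using centralizer_conj[OF K aC bc] .
    ultimately have "inv a \<otimes> (inv b \<otimes> a \<otimes> b) \<in> centralizer G K" by (rule subgroup.m_closed[OF sg])
    thus "comm_elem G a b \<in> centralizer G K" unfolding comm_elem_def using ac bc by (simp add: m_assoc)
  qed
  thus ?case unfolding comm_iter.simps comm_subgroup_def by (rule generate_subgroup_incl[OF _ sg])
qed

lemma comm_elem_prod: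
  assumes "a \<in> carrier G" "k \<in> carrier G" "r \<in> carrier G" "a \<otimes> k = k \<otimes> a"
  shows "comm_elem G a (k \<otimes> r) = comm_elem G a r"
proof -
  have h: "a \<otimes> (k \<otimes> r) = k \<otimes> (a \<otimes> r)"
  proof -
    have "a \<otimes> (k \<otimes> r) = a \<otimes> k \<otimes> r" using assms by (metis m_assoc)
    also have "\<dots> = k \<otimes> a \<otimes> r" using assms by simp
    finally show ?thesis using assms by (metis m_assoc)
  qed
  have h2: "inv k \<otimes> (k \<otimes> (a \<otimes> r)) = a \<otimes> r"
    using assms by (simp add: m_assoc[symmetric])
  show ?thesis
    unfolding comm_elem_def using assms by (simp add: inv_mult_group m_assoc h h2)
qed

lemma comm_iter_prod:
  assumes K: "K \<lhd> G" and R: "R \<subseteq> carrier G" and Xs: "Xs \<subseteq> centralizer G K"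
  shows "comm_iter G Xs (K <#> R) k \<subseteq> comm_iter G Xs R k"
proof (induction k)
  case 0 thus ?case by simp
next
  case (Suc k)
  have Kc: "K \<subseteq> carrier G" using subgroup.subset[OF normal_imp_subgroup[OF K]] .
  have "{comm_elem G a b | a b. a \<in> comm_iter G Xs (K <#> R) k \<and> b \<in> K <#> R}
     \<subseteq> {comm_elem G a b | a b. a \<in> comm_iter G Xs R k \<and> b \<in> R}"
  proof clarify
    fix a b assume a: "a \<in> comm_iter G Xs (K <#> R) k" and b: "b \<in> K <#> R"
    then obtain x r where x: "x \<in> K" and r: "r \<in> R" and bx: "b = x \<otimes> r"
      unfolding set_mult_def by auto
    have a': "a \<in> comm_iter G Xs R k" using a Suc by auto
    have aC: "a \<in> centralizer G K" using a' comm_iter_in_C[OF K R Xs] by auto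
    have ac: "a \<in> carrier G" using aC centralizer_sub by auto
    have e: "a \<otimes> x = x \<otimes> a" using aC x unfolding centralizer_def by auto
    have "comm_elem G a b = comm_elem G a r"
      unfolding bx using comm_elem_prod[OF ac _ _ e] x r Kc R by auto
    thus "\<exists>a' b'. comm_elem G a b = comm_elem G a' b' \<and> a' \<in> comm_iter G Xs R k \<and> b' \<in> R"
      using a' r by blast
  qed
  thus ?case unfolding comm_iter.simps comm_subgroup_def by (rule mono_generate)
qed

lemma set_mult_one_left: "subgroup R G \<Longrightarrow> K \<subseteq> carrier G \<Longrightarrow> K \<subseteq> K <#> R"
  unfolding set_mult_def using subgroup.one_closed by fastforce

lemma set_mult_one_right: "subgroup K G \<Longrightarrow> R \<subseteq> carrier G \<Longrightarrow> R \<subseteq> K <#> R"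
  unfolding set_mult_def using subgroup.one_closed by fastforce

lemma set_mult_triv: "subgroup K G \<Longrightarrow> K <#> {\<one>} = K"
  unfolding set_mult_def using subgroup.subset by fastforce

lemma core_step:
  assumes K: "K \<lhd> G" and R': "R' \<lhd> G" and R: "R \<lhd> G" and p: "2 \<le> p"
    and h: "comm_iter G (Omega1 G p (centralizer G R')) R (p - 1) = {\<one>}"
  shows "comm_iter G (Omega1 G p (centralizer G (K <#> R'))) (K <#> R) (p - 1) = {\<one>}"
proof -
  have Ks: "subgroup K G" "K \<subseteq> carrier G" using normal_imp_subgroup[OF K] subgroup.subset[OF normal_imp_subgroup[OF K]] by auto
  have R's: "subgroup R' G" "R' \<subseteq> carrier G" using normal_imp_subgroup[OF R'] subgroup.subset[OF normal_imp_subgroup[OF R']] by auto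
  have Rs: "subgroup R G" "R \<subseteq> carrier G" using normal_imp_subgroup[OF R] subgroup.subset[OF normal_imp_subgroup[OF R]] by auto
  let ?X = "Omega1 G p (centralizer G (K <#> R'))"
  have c1: "centralizer G (K <#> R') \<subseteq> centralizer G K"
    by (rule centralizer_anti, rule set_mult_one_left[OF R's(1) Ks(2)])
  have c2: "centralizer G (K <#> R') \<subseteq> centralizer G R'"
    by (rule centralizer_anti, rule set_mult_one_right[OF Ks(1) R's(2)])
  have XC: "?X \<subseteq> centralizer G K"
    unfolding Omega1_def
    by (rule generate_subgroup_incl[OF _ centralizer_subgroup[OF Ks(2)]]) (use c1 in auto)
  have X2: "?X \<subseteq> Omega1 G p (centralizer G R')" by (rule Omega1_mono[OF c2])
  have "comm_iter G ?X (K <#> R) (p - 1) \<subseteq> comm_iter G ?X R (p - 1)"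
    by (rule comm_iter_prod[OF K Rs(2) XC])
  also have "\<dots> \<subseteq> comm_iter G (Omega1 G p (centralizer G R')) R (p - 1)"
    by (rule comm_iter_mono1[OF X2])
  finally have "comm_iter G ?X (K <#> R) (p - 1) \<subseteq> {\<one>}" using h by simp
  moreover have "\<one> \<in> comm_iter G ?X (K <#> R) (p - 1)" using p by (intro comm_iter_one) auto
  ultimately show ?thesis by auto
qed

lemma chain_prod:
  assumes p: "2 \<le> p" and K: "K \<lhd> G" and cK: "oliver_chain G p K"
    and R: "R \<lhd> G" and cR: "oliver_chain G p R"
  shows "oliver_chain G p (K <#> R)"
proof -
  obtain n1 Q where Q0: "Q 0 = {\<one>}" and Qn: "Q n1 = K" and Qnorm: "\<forall>i\<le>n1. Q i \<lhd> G"
    and Qmono: "\<forall>i<n1. Q i \<subseteq> Q (Suc i)"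
    and Qc: "\<forall>i. 1 \<le> i \<and> i \<le> n1 \<longrightarrow>
              comm_iter G (Omega1 G p (centralizer G (Q (i - 1)))) (Q i) (p - 1) = {\<one>}"
    using cK unfolding oliver_chain_def by blast
  obtain n2 P where P0: "P 0 = {\<one>}" and Pn: "P n2 = R" and Pnorm: "\<forall>i\<le>n2. P i \<lhd> G"
    and Pmono: "\<forall>i<n2. P i \<subseteq> P (Suc i)"
    and Pc: "\<forall>i. 1 \<le> i \<and> i \<le> n2 \<longrightarrow>
              comm_iter G (Omega1 G p (centralizer G (P (i - 1)))) (P i) (p - 1) = {\<one>}"
    using cR unfolding oliver_chain_def by blast
  have Ks: "subgroup K G" using normal_imp_subgroup[OF K] .
  have KP0: "K <#> P 0 = K" using P0 set_mult_triv[OF Ks] by simp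
  define Q' where "Q' i = (if i < n1 then Q i else K <#> P (i - n1))" for i
  show ?thesis unfolding oliver_chain_def
  proof (intro exI conjI allI impI)
    show "Q' 0 = {\<one>}" using Q0 Qn KP0 unfolding Q'_def by auto
    show "Q' (n1 + n2) = K <#> R" using Pn unfolding Q'_def by simp
  next
    fix i assume i: "i \<le> n1 + n2"
    show "Q' i \<lhd> G"
    proof (cases "i < n1")
      case True thus ?thesis using Qnorm unfolding Q'_def by simp
    next
      case False
      have "P (i - n1) \<lhd> G" using Pnorm i by simp
      thus ?thesis using False K normal_subgroup_set_mult_closed unfolding Q'_def by simp
    qed
  next
    fix i assume i: "i < n1 + n2"
    show "Q' i \<subseteq> Q' (Suc i)"
    proof (cases "Suc i < n1")
      case True thus ?thesis using Qmono unfolding Q'_def by simp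
    next
      case F: False
      show ?thesis
      proof (cases "i < n1")
        case True
        hence "Suc i = n1" using F by simp
        thus ?thesis using True Qmono Qn KP0 unfolding Q'_def by auto
      next
        case False
        have "P (i - n1) \<subseteq> P (Suc (i - n1))" using Pmono i False by simp
        moreover have "Suc i - n1 = Suc (i - n1)" using False by simp
        ultimately show ?thesis using False F unfolding Q'_def by (simp add: mono_set_mult)
      qed
    qed
  next
    fix i assume i: "1 \<le> i \<and> i \<le> n1 + n2"
    show "comm_iter G (Omega1 G p (centralizer G (Q' (i - 1)))) (Q' i) (p - 1) = {\<one>}"
    proof (cases "i \<le> n1")
      case True
      have "i - 1 < n1" using True i by linarith
      hence "Q' (i - 1) = Q (i - 1)" unfolding Q'_def by simp
      moreover have "Q' i = Q i" using True Qn KP0 unfolding Q'_def by auto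
      ultimately show ?thesis using Qc True i by simp
    next
      case False
      define j where "j = i - n1"
      have j: "1 \<le> j" "j \<le> n2" using False i unfolding j_def by auto
      have n: "\<not> (i - 1 < n1)" using False by linarith
      have n2: "i - 1 - n1 = j - 1" unfolding j_def by linarith
      have e1: "Q' (i - 1) = K <#> P (j - 1)" using n n2 unfolding Q'_def by simp
      have e2: "Q' i = K <#> P j" using False unfolding Q'_def j_def by simp
      have "comm_iter G (Omega1 G p (centralizer G (P (j - 1)))) (P j) (p - 1) = {\<one>}"
        using Pc j by simp
      moreover have n1: "P (j - 1) \<lhd> G" using Pnorm j by auto
      moreover have n2: "P j \<lhd> G" using Pnorm j by auto
      ultimately show ?thesis unfolding e1 e2 using core_step[OF K n1 n2 p] by simp
    qed
  qed
qed

lemma oliver_props: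
  assumes fin: "finite (carrier G)" and p: "2 \<le> p"
  shows "oliver G p \<lhd> G \<and> oliver_chain G p (oliver G p) \<and>
         (\<forall>K'. K' \<lhd> G \<and> oliver_chain G p K' \<longrightarrow> K' \<subseteq> oliver G p)"
proof -
  define F where "F = {K. K \<lhd> G \<and> oliver_chain G p K}"
  have FP: "F \<subseteq> Pow (carrier G)"
  proof
    fix K assume "K \<in> F"
    hence "K \<lhd> G" unfolding F_def by simp
    thus "K \<in> Pow (carrier G)" using subgroup.subset[OF normal_imp_subgroup[OF \<open>K \<lhd> G\<close>]] by simp
  qed
  have Ffin: "finite F" using finite_subset[OF FP] fin by simp
  have triv: "{\<one>} \<in> F" unfolding F_def oliver_chain_def
    using one_is_normal by (intro CollectI conjI exI[of _ 0] exI[of _ "\<lambda>_. {\<one>}"]) auto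
  define m where "m = Max (card ` F)"
  have "m \<in> card ` F" unfolding m_def using Ffin triv by (intro Max_in) auto
  then obtain K where KF: "K \<in> F" and Km: "card K = m" by auto
  have Kmax: "card K' \<le> card K" if "K' \<in> F" for K'
    using Km Ffin that unfolding m_def by auto
  have Kc: "K \<subseteq> carrier G" using KF FP by auto
  have big: "K' \<subseteq> K" if K'F: "K' \<in> F" for K'
  proof -
    have Kn: "K \<lhd> G" and K'n: "K' \<lhd> G" using KF K'F unfolding F_def by auto
    have KK: "K <#> K' \<in> F" using KF K'F chain_prod[OF p] normal_subgroup_set_mult_closed[OF Kn K'n]
      unfolding F_def by auto
    have K'c: "K' \<subseteq> carrier G" using K'F FP by auto
    have s1: "K \<subseteq> K <#> K'" using set_mult_one_left[OF normal_imp_subgroup[OF K'n] Kc] .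
    have s2: "K' \<subseteq> K <#> K'" using set_mult_one_right[OF normal_imp_subgroup[OF Kn] K'c] .
    have fKK: "finite (K <#> K')" using KK FP fin by (meson PowD finite_subset subsetD)
    have "K = K <#> K'" using card_subset_eq[OF fKK s1] Kmax[OF KK] card_mono[OF fKK s1] by simp
    thus ?thesis using s2 by simp
  qed
  have PK: "K \<lhd> G \<and> oliver_chain G p K \<and> (\<forall>K'. K' \<lhd> G \<and> oliver_chain G p K' \<longrightarrow> K' \<subseteq> K)"
    using KF big unfolding F_def by auto
  have eq: "oliver G p = K" unfolding oliver_def
  proof (rule the_equality)
    show "K \<lhd> G \<and> oliver_chain G p K \<and> (\<forall>K'. K' \<lhd> G \<and> oliver_chain G p K' \<longrightarrow> K' \<subseteq> K)" by (rule PK)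
    fix K2 assume a: "K2 \<lhd> G \<and> oliver_chain G p K2 \<and> (\<forall>K'. K' \<lhd> G \<and> oliver_chain G p K' \<longrightarrow> K' \<subseteq> K2)"
    have "K2 \<subseteq> K" using a PK by simp
    moreover have "K \<subseteq> K2" using a PK by simp
    ultimately show "K2 = K" by (rule subset_antisym)
  qed
  show ?thesis unfolding eq by (rule PK)
qed

end


context group begin

lemma ord_sub:
  assumes L: "subgroup L G"
  shows "group.ord (G\<lparr>carrier := L\<rparr>) x = ord x"
proof -
  have g: "group (G\<lparr>carrier := L\<rparr>)" by (rule subgroup_imp_group[OF L])
  show ?thesis
    by (simp add: group.ord_def[OF g] group.ord_def[OF is_group] nat_pow_def)
qed

lemma comm_elem_sub:
  assumes L: "subgroup L G" and a: "a \<in> L" and b: "b \<in> L"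
  shows "comm_elem (G\<lparr>carrier := L\<rparr>) a b = comm_elem G a b"
    and "comm_elem G a b \<in> L"
proof -
  show "comm_elem (G\<lparr>carrier := L\<rparr>) a b = comm_elem G a b"
    unfolding comm_elem_def using m_inv_consistent[OF L a] m_inv_consistent[OF L b] by simp
  show "comm_elem G a b \<in> L"
    unfolding comm_elem_def
    by (intro subgroup.m_closed[OF L] subgroup.m_inv_closed[OF L] a b)
qed

lemma comm_iter_sub:
  assumes L: "subgroup L G" and A: "A \<subseteq> L" and B: "B \<subseteq> L"
  shows "comm_iter (G\<lparr>carrier := L\<rparr>) A B k = comm_iter G A B k \<and> comm_iter G A B k \<subseteq> L"
proof (induction k)
  case 0 thus ?case using A by simp
next
  case (Suc k)
  define T where "T = {comm_elem G a b | a b. a \<in> comm_iter G A B k \<and> b \<in> B}"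
  have TL: "T \<subseteq> L" unfolding T_def using Suc B comm_elem_sub(2)[OF L] by blast
  have eqT: "{comm_elem (G\<lparr>carrier := L\<rparr>) a b | a b. a \<in> comm_iter (G\<lparr>carrier := L\<rparr>) A B k \<and> b \<in> B} = T"
  proof -
    have "comm_iter (G\<lparr>carrier := L\<rparr>) A B k = comm_iter G A B k" using Suc by simp
    moreover have "comm_elem (G\<lparr>carrier := L\<rparr>) a b = comm_elem G a b"
      if "a \<in> comm_iter G A B k" "b \<in> B" for a b
      using comm_elem_sub(1)[OF L] that Suc B by blast
    ultimately show ?thesis unfolding T_def by force
  qed
  have "comm_iter (G\<lparr>carrier := L\<rparr>) A B (Suc k) = generate (G\<lparr>carrier := L\<rparr>) T"
    unfolding comm_iter.simps comm_subgroup_def eqT ..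
  also have "\<dots> = generate G T" by (rule generate_consistent[OF TL L])
  finally have e: "comm_iter (G\<lparr>carrier := L\<rparr>) A B (Suc k) = generate G T" .
  have e2: "comm_iter G A B (Suc k) = generate G T" unfolding comm_iter.simps comm_subgroup_def T_def ..
  have "generate G T \<subseteq> L" by (rule generate_subgroup_incl[OF TL L])
  thus ?case using e e2 by simp
qed

lemma Omega1_sub:
  assumes L: "subgroup L G"
  shows "Omega1 (G\<lparr>carrier := L\<rparr>) p (centralizer (G\<lparr>carrier := L\<rparr>) Q) \<subseteq> Omega1 G p (centralizer G Q)"
    and "Omega1 (G\<lparr>carrier := L\<rparr>) p (centralizer (G\<lparr>carrier := L\<rparr>) Q) \<subseteq> L"
proof -
  have Lc: "L \<subseteq> carrier G" using subgroup.subset[OF L] .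
  define T where "T = {x \<in> centralizer (G\<lparr>carrier := L\<rparr>) Q. group.ord (G\<lparr>carrier := L\<rparr>) x = p}"
  have CL: "centralizer (G\<lparr>carrier := L\<rparr>) Q \<subseteq> L" unfolding centralizer_def by auto
  have CG: "centralizer (G\<lparr>carrier := L\<rparr>) Q \<subseteq> centralizer G Q"
    unfolding centralizer_def using Lc by auto
  have TL: "T \<subseteq> L" unfolding T_def using CL by auto
  have "Omega1 (G\<lparr>carrier := L\<rparr>) p (centralizer (G\<lparr>carrier := L\<rparr>) Q) = generate G T"
    unfolding Omega1_def T_def[symmetric] by (rule generate_consistent[OF TL L])
  moreover have "T \<subseteq> {x \<in> centralizer G Q. ord x = p}"
    unfolding T_def using CG CL ord_sub[OF L] by auto
  ultimately show "Omega1 (G\<lparr>carrier := L\<rparr>) p (centralizer (G\<lparr>carrier := L\<rparr>) Q) \<subseteq> Omega1 G p (centralizer G Q)"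
    unfolding Omega1_def using mono_generate by simp
  show "Omega1 (G\<lparr>carrier := L\<rparr>) p (centralizer (G\<lparr>carrier := L\<rparr>) Q) \<subseteq> L"
    unfolding Omega1_def T_def[symmetric] using generate_consistent[OF TL L] generate_subgroup_incl[OF TL L] by simp
qed

lemma normal_sub:
  assumes L: "subgroup L G" and N: "N \<lhd> G" and NL: "N \<subseteq> L"
  shows "N \<lhd> G\<lparr>carrier := L\<rparr>"
proof -
  have g: "group (G\<lparr>carrier := L\<rparr>)" by (rule subgroup_imp_group[OF L])
  have Ns: "subgroup N G" by (rule normal_imp_subgroup[OF N])
  show ?thesis
    unfolding group.normal_inv_iff[OF g]
  proof (intro conjI ballI)
    show "subgroup N (G\<lparr>carrier := L\<rparr>)" by (rule subgroup_incl[OF Ns L NL])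
    fix x h assume x: "x \<in> carrier (G\<lparr>carrier := L\<rparr>)" and h: "h \<in> N"
    have xL: "x \<in> L" using x by simp
    have xc: "x \<in> carrier G" using xL subgroup.subset[OF L] by auto
    have "x \<otimes> h \<otimes> inv x \<in> N" by (rule normal.inv_op_closed2[OF N xc h])
    thus "x \<otimes>\<^bsub>G\<lparr>carrier := L\<rparr>\<^esub> h \<otimes>\<^bsub>G\<lparr>carrier := L\<rparr>\<^esub> inv\<^bsub>G\<lparr>carrier := L\<rparr>\<^esub> x \<in> N"
      using m_inv_consistent[OF L xL] by simp
  qed
qed

end


theorem lemma3p1:
  fixes S :: "('a, 'b) monoid_scheme" and p :: nat and L :: "'a set"
  assumes "Factorial_Ring.prime p"
    and "p_group S p"
    and "subgroup L S"
    and "oliver S p \<subseteq> L"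
  shows "oliver S p \<subseteq> oliver (S\<lparr>carrier := L\<rparr>) p"
proof -
  have gS: "group S" and fin: "finite (carrier S)" using assms(2) unfolding p_group_def by auto
  interpret group S by (rule gS)
  have p2: "2 \<le> p" using prime_ge_2_nat assms(1) by blast
  have L: "subgroup L S" by (rule assms(3))
  have gL: "group (S\<lparr>carrier := L\<rparr>)" by (rule subgroup_imp_group[OF L])
  have finL: "finite (carrier (S\<lparr>carrier := L\<rparr>))"
    using finite_subset[OF subgroup.subset[OF L] fin] by simp
  define Xo where "Xo = oliver S p"
  have XoL: "Xo \<subseteq> L" using assms(4) unfolding Xo_def .
  have PS: "Xo \<lhd> S \<and> oliver_chain S p Xo" using oliver_props[OF fin p2] unfolding Xo_def by blast
  obtain n Q where Q0: "Q 0 = {\<one>\<^bsub>S\<^esub>}" and Qn: "Q n = Xo" and Qnorm: "\<forall>i\<le>n. Q i \<lhd> S"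
    and Qmono: "\<forall>i<n. Q i \<subseteq> Q (Suc i)"
    and Qc: "\<forall>i. 1 \<le> i \<and> i \<le> n \<longrightarrow>
              comm_iter S (Omega1 S p (centralizer S (Q (i - 1)))) (Q i) (p - 1) = {\<one>\<^bsub>S\<^esub>}"
    using PS unfolding oliver_chain_def by blast
  have Qup: "\<forall>i\<le>j. Q i \<subseteq> Q j" if "j \<le> n" for j
    using that
  proof (induction j)
    case 0 thus ?case by simp
  next
    case (Suc j)
    have "Q j \<subseteq> Q (Suc j)" using Qmono Suc.prems by simp
    thus ?case using Suc by (auto simp: le_Suc_eq)
  qed
  have QL: "Q i \<subseteq> L" if "i \<le> n" for i
    using Qup[of n] that Qn XoL by auto
  have XnL: "Xo \<lhd> S\<lparr>carrier := L\<rparr>" using normal_sub[OF L _ XoL] PS by blast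
  have cL: "oliver_chain (S\<lparr>carrier := L\<rparr>) p Xo"
    unfolding oliver_chain_def
  proof (intro exI conjI allI impI)
    show "Q 0 = {\<one>\<^bsub>S\<lparr>carrier := L\<rparr>\<^esub>}" using Q0 by simp
    show "Q n = Xo" by (rule Qn)
  next
    fix i assume "i \<le> n"
    thus "Q i \<lhd> S\<lparr>carrier := L\<rparr>" using normal_sub[OF L _ QL] Qnorm by blast
  next
    fix i assume "i < n" thus "Q i \<subseteq> Q (Suc i)" using Qmono by simp
  next
    fix i assume i: "1 \<le> i \<and> i \<le> n"
    let ?O = "Omega1 (S\<lparr>carrier := L\<rparr>) p (centralizer (S\<lparr>carrier := L\<rparr>) (Q (i - 1)))"
    have O1: "?O \<subseteq> Omega1 S p (centralizer S (Q (i - 1)))" by (rule Omega1_sub(1)[OF L])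
    have O2: "?O \<subseteq> L" by (rule Omega1_sub(2)[OF L])
    have e: "comm_iter (S\<lparr>carrier := L\<rparr>) ?O (Q i) (p - 1) = comm_iter S ?O (Q i) (p - 1)"
      using comm_iter_sub[OF L O2 QL] i by blast
    have "comm_iter S ?O (Q i) (p - 1) \<subseteq> comm_iter S (Omega1 S p (centralizer S (Q (i - 1)))) (Q i) (p - 1)"
      by (rule comm_iter_mono1[OF O1])
    also have "\<dots> = {\<one>\<^bsub>S\<^esub>}" using Qc i by blast
    finally have "comm_iter S ?O (Q i) (p - 1) \<subseteq> {\<one>\<^bsub>S\<^esub>}" .
    moreover have "\<one>\<^bsub>S\<^esub> \<in> comm_iter S ?O (Q i) (p - 1)" using p2 by (intro comm_iter_one) auto
    ultimately show "comm_iter (S\<lparr>carrier := L\<rparr>) ?O (Q i) (p - 1) = {\<one>\<^bsub>S\<lparr>carrier := L\<rparr>\<^esub>}"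
      unfolding e by auto
  qed
  have "\<forall>K'. K' \<lhd> S\<lparr>carrier := L\<rparr> \<and> oliver_chain (S\<lparr>carrier := L\<rparr>) p K' \<longrightarrow> K' \<subseteq> oliver (S\<lparr>carrier := L\<rparr>) p"
    using group.oliver_props[OF gL finL p2] by blast
  thus ?thesis using XnL cL unfolding Xo_def[symmetric] by blast
qed

end
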